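(* Let $\gamma>0$, let $\beta_1=\beta_1(\gamma)$ be the unique positive solution of $\frac{\sqrt\pi}{2}\gamma x(1+x)^{1/2}(3+x)=1$, and let $0\le\beta<\beta_1$. For each $\lambda>0$ let $\varphi_\lambda$ be the unique solution, within the set of bounded analytic functions $h:[0,\lambda]\to\mathbb{R}$ with $0\le h\le 1$, of \begin{align*} &[(1+\beta y(\eta))y'(\eta)]'+2\eta y'(\eta)=0, \quad 0<\eta<\lambda,\\ &y'(0)+\beta y(0)y'(0)-\gamma y(0)=0,\\ &y(\lambda)=1. \end{align*} Then $\varphi_\lambda'$ depends continuously on the parameter $\lambda>0$; in particular the map $\lambda\mapsto\varphi_\lambda'(\lambda)$ is continuous on $(0,\infty)$. *)

theory Defs
  imports "HOL-Analysis.Analysis"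
begin

definition beta1 :: "real \<Rightarrow> real" where
  "beta1 \<gamma> = (THE x. x > 0 \<and> sqrt pi / 2 * \<gamma> * x * sqrt (1 + x) * (3 + x) = 1)"

definition real_analytic_on :: "(real \<Rightarrow> real) \<Rightarrow> real set \<Rightarrow> bool" where
  "real_analytic_on h S \<longleftrightarrow>
     (\<forall>x\<in>S. \<exists>r>0. \<exists>a::nat \<Rightarrow> real.
        \<forall>y\<in>S. \<bar>y - x\<bar> < r \<longrightarrow> (\<lambda>n. a n * (y - x) ^ n) sums h y)"

definition admissible :: "real \<Rightarrow> (real \<Rightarrow> real) \<Rightarrow> bool" where
  "admissible lam h \<longleftrightarrow> real_analytic_on h {0..lam} \<and>
     bounded (h ` {0..lam}) \<and> (\<forall>t\<in>{0..lam}. 0 \<le> h t \<and> h t \<le> 1)"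

definition solves_bvp :: "real \<Rightarrow> real \<Rightarrow> real \<Rightarrow> (real \<Rightarrow> real) \<Rightarrow> bool" where
  "solves_bvp \<gamma> \<beta> lam h \<longleftrightarrow>
     (\<exists>y'::real \<Rightarrow> real.
        (\<forall>t\<in>{0..lam}. (h has_real_derivative y' t) (at t within {0..lam})) \<and>
        (\<forall>t\<in>{0<..<lam}. ((\<lambda>s. (1 + \<beta> * h s) * y' s) has_real_derivative (- 2 * t * y' t)) (at t)) \<and>
        y' 0 + \<beta> * h 0 * y' 0 - \<gamma> * h 0 = 0 \<and>
        h lam = 1)"

end

theory Submission
  imports Defs
begin



lemma mono_deriv:
  fixes f f' :: "real \<Rightarrow> real"
  assumes d: "\<And>x. x \<in> {a..b} \<Longrightarrow> (f has_real_derivative f' x) (at x within {a..b})"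
    and nn: "\<And>x. x \<in> {a..b} \<Longrightarrow> f' x \<ge> 0"
    and xy: "a \<le> x" "x \<le> y" "y \<le> b"
  shows "f x \<le> f y"
proof (rule DERIV_nonneg_imp_increasing_open[OF xy(2)])
  have "continuous_on {a..b} f" using d by (rule DERIV_continuous_on)
  then show "continuous_on {x..y} f" by (rule continuous_on_subset) (use xy in auto)
  fix z assume z: "x < z" "z < y"
  then have "at z within {a..b} = at z" using xy by (intro at_within_Icc_at) auto
  then show "\<exists>l. (f has_real_derivative l) (at z) \<and> 0 \<le> l"
    using d[of z] nn[of z] z xy by auto
qed

lemma strict_mono_deriv:
  fixes f f' :: "real \<Rightarrow> real"
  assumes d: "\<And>x. x \<in> {a..b} \<Longrightarrow> (f has_real_derivative f' x) (at x within {a..b})"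
    and nn: "\<And>x. x \<in> {a..b} \<Longrightarrow> f' x > 0"
    and xy: "a \<le> x" "x < y" "y \<le> b"
  shows "f x < f y"
proof -
  have "continuous_on {a..b} f" using d by (rule DERIV_continuous_on)
  then have c: "continuous_on {x..y} f" by (rule continuous_on_subset) (use xy in auto)
  have dd: "f differentiable (at z)" if z: "x < z" "z < y" for z
  proof -
    have "at z within {a..b} = at z" using xy that by (intro at_within_Icc_at) auto
    then show "f differentiable (at z)" using d[of z] that xy
      by (auto simp: real_differentiable_def)
  qed
  obtain l z where z: "x < z" "z < y" "DERIV f z :> l" "f y - f x = (y - x) * l"
    using MVT[OF xy(2) c dd] by auto
  have "at z within {a..b} = at z" using xy z by (intro at_within_Icc_at) auto
  then have "l = f' z" using d[of z] z xy DERIV_unique[OF z(3)] by auto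
  then have "l > 0" using nn[of z] z xy by auto
  then show ?thesis using z xy by (simp add: algebra_simps) (metis diff_gt_0_iff_gt mult_pos_pos z(4) xy(2))
qed

lemma bound_deriv:
  fixes f f' :: "real \<Rightarrow> real"
  assumes d: "\<And>x. x \<in> {a..b} \<Longrightarrow> (f has_real_derivative f' x) (at x within {a..b})"
    and nn: "\<And>x. x \<in> {a..b} \<Longrightarrow> \<bar>f' x\<bar> \<le> B"
    and xy: "x \<in> {a..b}" "y \<in> {a..b}"
  shows "\<bar>f x - f y\<bar> \<le> B * \<bar>x - y\<bar>"
  using field_differentiable_bound[of "{a..b}" f f' B x y] d nn xy by auto

lemma gronwall0:
  fixes v :: "real \<Rightarrow> real"
  assumes c: "continuous_on {0..L} v" and nn: "\<And>t. t \<in> {0..L} \<Longrightarrow> v t \<ge> 0"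
    and K: "K \<ge> 0"
    and le: "\<And>t. t \<in> {0..L} \<Longrightarrow> v t \<le> K * integral {0..t} v"
    and t: "t \<in> {0..L}"
  shows "v t = 0"
proof -
  define V where "V t = integral {0..t} v" for t
  have dV: "(V has_real_derivative v x) (at x within {0..L})" if "x \<in> {0..L}" for x
    unfolding V_def by (rule integral_has_real_derivative[OF c that])
  define g where "g t = - exp (- K * t) * V t" for t
  have dg: "(g has_real_derivative (exp (- K * x) * (K * V x - v x))) (at x within {0..L})"
    if "x \<in> {0..L}" for x
    unfolding g_def
    by (rule derivative_eq_intros dV[OF that] refl)+ (simp add: algebra_simps)
  have "g 0 \<le> g t"
    by (rule mono_deriv[OF dg]) (use le t in \<open>auto simp: V_def\<close>)
  moreover have "g 0 = 0" by (simp add: g_def V_def)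
  moreover have "V t \<ge> 0" unfolding V_def
  proof (rule integral_nonneg)
    show "v integrable_on {0..t}"
      by (rule integrable_continuous_interval, rule continuous_on_subset[OF c]) (use t in auto)
  qed (use t nn in auto)
  ultimately have "V t = 0" by (simp add: g_def) (smt (verit, ccfv_SIG) exp_gt_zero mult_pos_pos)
  then show ?thesis using le[OF t] nn[OF t] by (simp add: V_def)
qed




definition Ifn :: "real \<Rightarrow> (real \<Rightarrow> real) \<Rightarrow> real \<Rightarrow> real" where
  "Ifn \<beta> h t = integral {0..t} (\<lambda>s. 2 * s / (1 + \<beta> * h s))"

definition Dfn :: "real \<Rightarrow> real \<Rightarrow> (real \<Rightarrow> real) \<Rightarrow> real \<Rightarrow> real" where
  "Dfn \<gamma> \<beta> h t = \<gamma> * h 0 * exp (- Ifn \<beta> h t) / (1 + \<beta> * h t)"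

definition good :: "real \<Rightarrow> real \<Rightarrow> real \<Rightarrow> (real \<Rightarrow> real) \<Rightarrow> bool" where
  "good \<gamma> \<beta> lam h \<longleftrightarrow> (\<forall>t\<in>{0..lam}. 0 \<le> h t \<and> h t \<le> 1) \<and> h lam = 1 \<and>
     (\<forall>t\<in>{0..lam}. (h has_real_derivative Dfn \<gamma> \<beta> h t) (at t within {0..lam}))"

lemma Ifn_deriv:
  assumes "\<beta> \<ge> 0" "continuous_on {0..L} h" "\<And>t. t \<in> {0..L} \<Longrightarrow> 0 \<le> h t" "t \<in> {0..L}"
  shows "(Ifn \<beta> h has_real_derivative 2 * t / (1 + \<beta> * h t)) (at t within {0..L})"
  unfolding Ifn_def
proof (rule integral_has_real_derivative[OF _ assms(4)])
  have "\<forall>x\<in>{0..L}. 1 + \<beta> * h x \<noteq> 0" using assms(1,3)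
    by (smt (verit) mult_nonneg_nonneg)
  then show "continuous_on {0..L} (\<lambda>s. 2 * s / (1 + \<beta> * h s))"
    using assms(2) by (intro continuous_intros) auto
qed

lemma to_good:
  assumes b: "\<beta> \<ge> 0" and lam: "lam > 0" and adm: "admissible lam h" and sol: "solves_bvp \<gamma> \<beta> lam h"
  shows "good \<gamma> \<beta> lam h"
proof -
  obtain y' where d1: "\<And>t. t\<in>{0..lam} \<Longrightarrow> (h has_real_derivative y' t) (at t within {0..lam})"
    and d2: "\<And>t. t\<in>{0<..<lam} \<Longrightarrow> ((\<lambda>s. (1 + \<beta> * h s) * y' s) has_real_derivative (- 2 * t * y' t)) (at t)"
    and bc: "y' 0 + \<beta> * h 0 * y' 0 - \<gamma> * h 0 = 0" and en: "h lam = 1"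
    using sol unfolding solves_bvp_def by blast
  have hb: "\<And>t. t\<in>{0..lam} \<Longrightarrow> 0 \<le> h t \<and> h t \<le> 1" using adm unfolding admissible_def by blast
  have hc: "continuous_on {0..lam} h" using d1 by (rule DERIV_continuous_on)
  have p1: "1 + \<beta> * h t \<ge> 1" if "t \<in> {0..lam}" for t using hb[OF that] b by simp
  have dI: "\<And>t. t \<in> {0..lam} \<Longrightarrow> (Ifn \<beta> h has_real_derivative 2 * t / (1 + \<beta> * h t)) (at t within {0..lam})"
    by (rule Ifn_deriv[OF b hc]) (use hb in auto)
  have Ic: "continuous_on {0..lam} (Ifn \<beta> h)" using dI by (rule DERIV_continuous_on)
  define z where "z t = (1 + \<beta> * h t) * y' t * exp (Ifn \<beta> h t)" for t
  have dz: "(z has_real_derivative 0) (at t within {0<..<lam})" if t: "t \<in> {0<..<lam}" for t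
  proof -
    have e: "at t within {0..lam} = at t" using t by (intro at_within_Icc_at) auto
    have dIt: "(Ifn \<beta> h has_real_derivative 2 * t / (1 + \<beta> * h t)) (at t)"
      using dI[of t] t e by auto
    have de: "((\<lambda>s. exp (Ifn \<beta> h s)) has_real_derivative exp (Ifn \<beta> h t) * (2 * t / (1 + \<beta> * h t))) (at t)"
      by (rule derivative_eq_intros dIt refl)+
    have "(z has_real_derivative 0) (at t)"
      unfolding z_def using DERIV_mult[OF d2[OF t] de] p1[of t] t by simp
    then show ?thesis by (metis has_field_derivative_at_within)
  qed
  obtain c where zc: "\<And>t. t \<in> {0<..<lam} \<Longrightarrow> z t = c"
    using has_field_derivative_zero_constant[of "{0<..<lam}" z] dz by auto
  define G where "G t = c * exp (- Ifn \<beta> h t) / (1 + \<beta> * h t)" for t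
  have yG: "y' t = G t" if "t \<in> {0<..<lam}" for t
  proof -
    have eq: "(1 + \<beta> * h t) * y' t * exp (Ifn \<beta> h t) = c" using zc[OF that] by (simp add: z_def)
    have "G t = (1 + \<beta> * h t) * y' t * (exp (Ifn \<beta> h t) * exp (- Ifn \<beta> h t)) / (1 + \<beta> * h t)"
      unfolding G_def eq[symmetric] by (simp add: ac_simps)
    then show ?thesis using p1[of t] that by (simp add: exp_minus_inverse)
  qed
  have Gc: "continuous_on {0..lam} G"
  proof -
    have "\<forall>x\<in>{0..lam}. 1 + \<beta> * h x \<noteq> 0" using p1 by force
    then show ?thesis unfolding G_def using hc Ic by (intro continuous_intros) auto
  qed
  have dInt: "((\<lambda>t. integral {0..t} G) has_real_derivative G t) (at t within {0..lam})"
    if "t \<in> {0..lam}" for t by (rule integral_has_real_derivative[OF Gc that])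
  have hrep: "h t = h 0 + integral {0..t} G" if t: "t \<in> {0..lam}" for t
  proof (cases "t = 0")
    case True then show ?thesis by simp
  next
    case False
    define k where "k s = h s - integral {0..s} G" for s
    have "k t = k 0"
    proof (rule DERIV_isconst_end[of 0 t k])
      show "0 < t" using False t by auto
      have "continuous_on {0..lam} k" unfolding k_def
        using hc DERIV_continuous_on[OF dInt] by (intro continuous_intros) auto
      then show "continuous_on {0..t} k" by (rule continuous_on_subset) (use t in auto)
      fix x assume x: "0 < x" "x < t"
      have e: "at x within {0..lam} = at x" using x t by (intro at_within_Icc_at) auto
      have "(k has_real_derivative y' x - G x) (at x)"
        unfolding k_def using d1[of x] dInt[of x] x t e by (intro derivative_intros) auto
      then show "(k has_real_derivative 0) (at x)" using yG[of x] x t by auto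
    qed
    then show ?thesis by (simp add: k_def)
  qed
  have dh: "(h has_real_derivative G t) (at t within {0..lam})" if t: "t \<in> {0..lam}" for t
  proof (rule has_field_derivative_transform_within[OF _ zero_less_one t])
    show "((\<lambda>t. h 0 + integral {0..t} G) has_real_derivative G t) (at t within {0..lam})"
      using DERIV_add[OF DERIV_const dInt[OF t]] by simp
  qed (simp add: hrep[symmetric])
  have "y' 0 = G 0"
    using vector_derivative_unique_within_closed_interval[of 0 lam 0 h "y' 0" "G 0"] lam
      d1[of 0] dh[of 0] by (auto simp: has_real_derivative_iff_has_vector_derivative)
  then have "y' 0 = c / (1 + \<beta> * h 0)" by (simp add: G_def Ifn_def)
  moreover have "y' 0 * (1 + \<beta> * h 0) = \<gamma> * h 0" using bc by (simp add: algebra_simps)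
  ultimately have "c = \<gamma> * h 0" using p1[of 0] lam by (simp add: divide_simps)
  then have "G = Dfn \<gamma> \<beta> h" by (auto simp: G_def Dfn_def)
  then show ?thesis unfolding good_def using hb en dh by auto
qed




definition Fb :: "real \<Rightarrow> real \<Rightarrow> real" where "Fb \<beta> x = x + \<beta> * x^2 / 2"

lemma Fb_diff: "0 \<le> \<beta> \<Longrightarrow> 0 \<le> x2 \<Longrightarrow> x2 \<le> x1 \<Longrightarrow> x1 - x2 \<le> Fb \<beta> x1 - Fb \<beta> x2"
proof -
  assume a: "0 \<le> \<beta>" "0 \<le> x2" "x2 \<le> x1"
  have "Fb \<beta> x1 - Fb \<beta> x2 = (x1 - x2) * (1 + \<beta> * (x1 + x2) / 2)"
    by (simp add: Fb_def power2_eq_square field_simps)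
  moreover have "(x1 - x2) * (1 + \<beta> * (x1 + x2) / 2) \<ge> (x1 - x2) * 1"
    using a by (intro mult_left_mono) auto
  ultimately show ?thesis by simp
qed

lemma Fb_mono: "0 \<le> \<beta> \<Longrightarrow> 0 \<le> x2 \<Longrightarrow> x2 \<le> x1 \<Longrightarrow> Fb \<beta> x2 \<le> Fb \<beta> x1"
  using Fb_diff[of \<beta> x2 x1] by simp

lemma Fb_strict: "0 \<le> \<beta> \<Longrightarrow> 0 \<le> x2 \<Longrightarrow> x2 < x1 \<Longrightarrow> Fb \<beta> x2 < Fb \<beta> x1"
  using Fb_diff[of \<beta> x2 x1] by simp

lemma arith1:
  assumes "0 \<le> \<beta>" "0 \<le> x1" "0 \<le> x2" "0 \<le> r" "r \<le> L"
  shows "2 * r / (1 + \<beta> * x1) - 2 * r / (1 + \<beta> * x2) \<le> 2 * L * \<beta> * max 0 (Fb \<beta> x2 - Fb \<beta> x1)"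
proof -
  have p1: "1 + \<beta> * x1 \<ge> 1" "1 + \<beta> * x2 \<ge> 1" using assms by auto
  have eq: "2 * r / (1 + \<beta> * x1) - 2 * r / (1 + \<beta> * x2) = 2 * r * \<beta> * (x2 - x1) / ((1 + \<beta> * x1) * (1 + \<beta> * x2))"
    using p1 by (simp add: field_simps)
  show ?thesis
  proof (cases "x2 \<le> x1")
    case True
    then have "2 * r * \<beta> * (x2 - x1) \<le> 0" using assms by (simp add: mult_nonneg_nonpos)
    then have "2 * r * \<beta> * (x2 - x1) / ((1 + \<beta> * x1) * (1 + \<beta> * x2)) \<le> 0"
      using p1 by (simp add: divide_nonpos_pos)
    moreover have "0 \<le> 2 * L * \<beta> * max 0 (Fb \<beta> x2 - Fb \<beta> x1)" using assms by auto
    ultimately show ?thesis using eq by linarith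
  next
    case False
    have n: "0 \<le> 2 * r * \<beta> * (x2 - x1)" using assms False by auto
    have "2 * r * \<beta> * (x2 - x1) / ((1 + \<beta> * x1) * (1 + \<beta> * x2)) \<le> 2 * r * \<beta> * (x2 - x1)"
    proof -
      have "(1 + \<beta> * x1) * (1 + \<beta> * x2) \<ge> 1" using p1 mult_mono[of 1 "1 + \<beta> * x1" 1 "1 + \<beta> * x2"] by simp
      then show ?thesis using n by (simp add: divide_le_eq mult_le_cancel_left1)
    qed
    also have "\<dots> \<le> 2 * L * \<beta> * (x2 - x1)" using assms False by (intro mult_right_mono mult_right_mono) auto
    also have "\<dots> \<le> 2 * L * \<beta> * max 0 (Fb \<beta> x2 - Fb \<beta> x1)"
      using Fb_diff[of \<beta> x1 x2] assms False by (intro mult_left_mono) auto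
    finally show ?thesis using eq by simp
  qed
qed

lemma arith2:
  fixes a1 a2 I1 I2 M :: real
  assumes "0 \<le> a2" "a2 \<le> a1" "a2 \<le> 1" "0 \<le> I1" "0 \<le> I2" "I1 - I2 \<le> M" "0 \<le> M"
  shows "a1 * exp (- I1) - a2 * exp (- I2) \<ge> - M"
proof -
  have "a1 * exp (- I1) \<ge> a2 * exp (- I1)" using assms(2) by (rule mult_right_mono) simp
  moreover have "exp (- I2) - exp (- I1) \<le> max 0 (I1 - I2)"
  proof (cases "I1 \<le> I2")
    case True then show ?thesis by simp
  next
    case False
    have "exp (- I2) - exp (- I1) = exp (- I2) * (1 - exp (- (I1 - I2)))"
      by (simp add: algebra_simps flip: exp_add)
    also have "\<dots> \<le> 1 * (I1 - I2)"
    proof (rule mult_mono)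
      show "exp (- I2) \<le> 1" using assms by simp
      show "1 - exp (- (I1 - I2)) \<le> I1 - I2" using exp_ge_add_one_self[of "- (I1 - I2)"] by (simp add: algebra_simps)
    qed (use False in auto)
    finally show ?thesis by simp
  qed
  moreover have "a2 * (exp (- I2) - exp (- I1)) \<le> max 0 (I1 - I2)"
  proof (cases "exp (- I2) - exp (- I1) \<le> 0")
    case True then show ?thesis using assms by (simp add: mult_nonneg_nonpos)
  next
    case False
    then have "a2 * (exp (- I2) - exp (- I1)) \<le> 1 * max 0 (I1 - I2)"
      using calculation(2) assms by (intro mult_mono) auto
    then show ?thesis by simp
  qed
  ultimately show ?thesis using assms
    by (smt (verit, best) right_diff_distrib)
qed




lemma good_basic:
  assumes g: "\<gamma> > 0" and b: "\<beta> \<ge> 0" and lam: "lam > 0" and gd: "good \<gamma> \<beta> lam h"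
  shows "continuous_on {0..lam} h"
    and "\<And>t. t \<in> {0..lam} \<Longrightarrow> (Ifn \<beta> h has_real_derivative 2 * t / (1 + \<beta> * h t)) (at t within {0..lam})"
    and "\<And>t. t \<in> {0..lam} \<Longrightarrow> 0 \<le> Ifn \<beta> h t"
    and "\<And>t. t \<in> {0..lam} \<Longrightarrow> 0 \<le> Dfn \<gamma> \<beta> h t \<and> Dfn \<gamma> \<beta> h t \<le> \<gamma>"
    and "h 0 > 0"
    and "\<And>t. t \<in> {0..lam} \<Longrightarrow> ((\<lambda>s. Fb \<beta> (h s)) has_real_derivative \<gamma> * h 0 * exp (- Ifn \<beta> h t)) (at t within {0..lam})"
proof -
  have hb: "\<And>t. t\<in>{0..lam} \<Longrightarrow> 0 \<le> h t \<and> h t \<le> 1" and en: "h lam = 1"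
    and dh: "\<And>t. t\<in>{0..lam} \<Longrightarrow> (h has_real_derivative Dfn \<gamma> \<beta> h t) (at t within {0..lam})"
    using gd unfolding good_def by auto
  show hc: "continuous_on {0..lam} h" using dh by (rule DERIV_continuous_on)
  show dI: "\<And>t. t \<in> {0..lam} \<Longrightarrow> (Ifn \<beta> h has_real_derivative 2 * t / (1 + \<beta> * h t)) (at t within {0..lam})"
    by (rule Ifn_deriv[OF b hc]) (use hb in auto)
  show I0: "0 \<le> Ifn \<beta> h t" if t: "t \<in> {0..lam}" for t
  proof -
    have "\<forall>x\<in>{0..lam}. 1 + \<beta> * h x \<noteq> 0" using hb b by (smt (verit) mult_nonneg_nonneg)
    then have "continuous_on {0..lam} (\<lambda>s. 2 * s / (1 + \<beta> * h s))"
      using hc by (intro continuous_intros) auto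
    then have "(\<lambda>s. 2 * s / (1 + \<beta> * h s)) integrable_on {0..t}"
      by (rule integrable_continuous_interval[OF continuous_on_subset]) (use t in auto)
    then show ?thesis unfolding Ifn_def
      by (rule integral_nonneg) (use hb b t in auto)
  qed
  show Db: "0 \<le> Dfn \<gamma> \<beta> h t \<and> Dfn \<gamma> \<beta> h t \<le> \<gamma>" if t: "t \<in> {0..lam}" for t
  proof -
    have p: "1 + \<beta> * h t \<ge> 1" using hb[OF t] b by simp
    have e: "exp (- Ifn \<beta> h t) \<le> 1" using I0[OF t] by simp
    have h0: "0 \<le> h 0" "h 0 \<le> 1" using hb[of 0] lam by auto
    have "\<gamma> * h 0 * exp (- Ifn \<beta> h t) \<le> \<gamma> * 1 * 1"
      using h0 e g by (intro mult_mono) auto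
    moreover have "\<gamma> * h 0 * exp (- Ifn \<beta> h t) \<ge> 0" using h0 g by simp
    ultimately show ?thesis using p unfolding Dfn_def
      by (auto simp: divide_le_eq) (smt (verit) mult_le_cancel_left1)
  qed
  show "h 0 > 0"
  proof (rule ccontr)
    assume "\<not> h 0 > 0"
    then have z: "h 0 = 0" using hb[of 0] lam by auto
    have "\<bar>h lam - h 0\<bar> \<le> 0 * \<bar>lam - 0\<bar>"
      by (rule bound_deriv[OF dh]) (use z lam in \<open>auto simp: Dfn_def\<close>)
    then show False using z en by simp
  qed
  show "((\<lambda>s. Fb \<beta> (h s)) has_real_derivative \<gamma> * h 0 * exp (- Ifn \<beta> h t)) (at t within {0..lam})"
    if t: "t \<in> {0..lam}" for t
  proof -
    have p: "1 + \<beta> * h t \<ge> 1" using hb[OF t] b by simp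
    have d2: "((\<lambda>s. h s * h s) has_real_derivative Dfn \<gamma> \<beta> h t * h t + Dfn \<gamma> \<beta> h t * h t) (at t within {0..lam})"
      by (rule DERIV_mult[OF dh[OF t] dh[OF t]])
    have d3: "((\<lambda>s. h s + \<beta> / 2 * (h s * h s)) has_real_derivative
        Dfn \<gamma> \<beta> h t + \<beta> / 2 * (Dfn \<gamma> \<beta> h t * h t + Dfn \<gamma> \<beta> h t * h t)) (at t within {0..lam})"
      by (intro DERIV_add DERIV_cmult dh[OF t] d2)
    have fe: "(\<lambda>s. Fb \<beta> (h s)) = (\<lambda>s. h s + \<beta> / 2 * (h s * h s))"
      by (auto simp: Fb_def power2_eq_square)
    have "Dfn \<gamma> \<beta> h t + \<beta> / 2 * (Dfn \<gamma> \<beta> h t * h t + Dfn \<gamma> \<beta> h t * h t) = \<gamma> * h 0 * exp (- Ifn \<beta> h t)"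
    proof -
      have k: "Dfn \<gamma> \<beta> h t * (1 + \<beta> * h t) = \<gamma> * h 0 * exp (- Ifn \<beta> h t)"
        using p unfolding Dfn_def by simp
      show ?thesis unfolding k[symmetric] by (simp add: algebra_simps)
    qed
    then show ?thesis using d3 fe by simp
  qed
qed




lemma Ifn_integrable:
  fixes \<beta> lam s :: real and h :: "real \<Rightarrow> real"
  assumes b: "\<beta> \<ge> 0" and hc: "continuous_on {0..lam} h" and hb: "\<And>t. t \<in> {0..lam} \<Longrightarrow> 0 \<le> h t"
    and s: "s \<in> {0..lam}"
  shows "(\<lambda>r. 2 * r / (1 + \<beta> * h r)) integrable_on {0..s}"
proof -
  have "\<forall>x\<in>{0..lam}. 1 + \<beta> * h x \<noteq> 0"
  proof
    fix x assume "x \<in> {0..lam}"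
    then have "0 \<le> h x" using hb by simp
    then have "0 \<le> \<beta> * h x" using b by simp
    then show "1 + \<beta> * h x \<noteq> 0" by linarith
  qed
  then have "continuous_on {0..lam} (\<lambda>s. 2 * s / (1 + \<beta> * h s))"
    using hc by (intro continuous_intros) auto
  then show ?thesis
    by (rule integrable_continuous_interval[OF continuous_on_subset]) (use s in auto)
qed

lemma cmp:
  assumes g: "\<gamma> > 0" and b: "\<beta> \<ge> 0" and l1: "l1 > 0" and l2: "l2 > 0"
    and g1: "good \<gamma> \<beta> l1 y1" and g2: "good \<gamma> \<beta> l2 y2"
    and L: "L \<le> l1" "L \<le> l2" and a: "y2 0 \<le> y1 0"
    and t: "t \<in> {0..L}"
  shows "y2 t \<le> y1 t"
proof -
  note B1 = good_basic[OF g b l1 g1] and B2 = good_basic[OF g b l2 g2]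
  have hb1: "\<And>t. t\<in>{0..l1} \<Longrightarrow> 0 \<le> y1 t \<and> y1 t \<le> 1" using g1 unfolding good_def by auto
  have hb2: "\<And>t. t\<in>{0..l2} \<Longrightarrow> 0 \<le> y2 t \<and> y2 t \<le> 1" using g2 unfolding good_def by auto
  have sub1: "{0..L} \<subseteq> {0..l1}" and sub2: "{0..L} \<subseteq> {0..l2}" using L by auto
  define w where "w s = Fb \<beta> (y1 s) - Fb \<beta> (y2 s)" for s
  define v where "v s = max 0 (- w s)" for s
  define u where "u s = \<gamma> * y1 0 * exp (- Ifn \<beta> y1 s) - \<gamma> * y2 0 * exp (- Ifn \<beta> y2 s)" for s
  have dw: "(w has_real_derivative u s) (at s within {0..L})" if s: "s \<in> {0..L}" for s
    unfolding w_def u_def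
    by (intro DERIV_diff DERIV_subset[OF B1(6) sub1] DERIV_subset[OF B2(6) sub2]) (use s sub1 sub2 in auto)
  have wc: "continuous_on {0..L} w" using dw by (rule DERIV_continuous_on)
  have vc: "continuous_on {0..L} v" unfolding v_def using wc by (intro continuous_intros)
  have vnn: "\<And>s. 0 \<le> v s" by (simp add: v_def)
  have vint: "v integrable_on {0..s}" if "s \<in> {0..L}" for s
    by (rule integrable_continuous_interval[OF continuous_on_subset[OF vc]]) (use that in auto)
  define K where "K = 2 * \<gamma> * \<beta> * L^2"
  have K0: "K \<ge> 0" using g b by (simp add: K_def)
  have key: "v t \<le> K * integral {0..t} v" if t: "t \<in> {0..L}" for t
  proof -
    define Vt where "Vt = integral {0..t} v"
    have Vt0: "Vt \<ge> 0" unfolding Vt_def by (rule integral_nonneg[OF vint[OF t]]) (simp add: vnn)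
    have Ib: "Ifn \<beta> y1 s - Ifn \<beta> y2 s \<le> 2 * L * \<beta> * Vt" if s: "s \<in> {0..t}" for s
    proof -
      have sL: "s \<in> {0..L}" using s t by auto
      have i1: "(\<lambda>r. 2 * r / (1 + \<beta> * y1 r)) integrable_on {0..s}"
        by (rule Ifn_integrable[OF b B1(1)]) (use hb1 sL sub1 in auto)
      have i2: "(\<lambda>r. 2 * r / (1 + \<beta> * y2 r)) integrable_on {0..s}"
        by (rule Ifn_integrable[OF b B2(1)]) (use hb2 sL sub2 in auto)
      have "Ifn \<beta> y1 s - Ifn \<beta> y2 s = integral {0..s} (\<lambda>r. 2 * r / (1 + \<beta> * y1 r) - 2 * r / (1 + \<beta> * y2 r))"
        unfolding Ifn_def by (rule integral_diff[OF i1 i2, symmetric])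
      also have "\<dots> \<le> integral {0..s} (\<lambda>r. 2 * L * \<beta> * v r)"
      proof (rule integral_le)
        show "(\<lambda>r. 2 * r / (1 + \<beta> * y1 r) - 2 * r / (1 + \<beta> * y2 r)) integrable_on {0..s}"
          using i1 i2 by (rule integrable_diff)
        show "(\<lambda>r. 2 * L * \<beta> * v r) integrable_on {0..s}" using integrable_on_cmult_left[OF vint[OF sL], of "2*L*\<beta>"] by simp
        fix r assume r: "r \<in> {0..s}"
        then have rL: "r \<in> {0..L}" using sL by auto
        show "2 * r / (1 + \<beta> * y1 r) - 2 * r / (1 + \<beta> * y2 r) \<le> 2 * L * \<beta> * v r"
          unfolding v_def w_def using arith1[of \<beta> "y1 r" "y2 r" r L] b hb1[of r] hb2[of r] rL sub1 sub2
          by (auto simp: max_def)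
      qed
      also have "\<dots> = 2 * L * \<beta> * integral {0..s} v" by simp
      also have "\<dots> \<le> 2 * L * \<beta> * Vt" unfolding Vt_def
      proof (rule mult_left_mono)
        show "integral {0..s} v \<le> integral {0..t} v"
          by (rule integral_subset_le) (use s t vint vnn in auto)
      qed (use b t in auto)
      finally show ?thesis .
    qed
    define c where "c = \<gamma> * (2 * L * \<beta> * Vt)"
    have c0: "c \<ge> 0" using g b Vt0 t by (simp add: c_def)
    have ub: "u s + c \<ge> 0" if s: "s \<in> {0..t}" for s
    proof -
      have sL: "s \<in> {0..L}" using s t by auto
      have "y1 0 * exp (- Ifn \<beta> y1 s) - y2 0 * exp (- Ifn \<beta> y2 s) \<ge> - (2 * L * \<beta> * Vt)"
        by (rule arith2) (use a hb2[of 0] l2 B1(3)[of s] B2(3)[of s] sL sub1 sub2 Ib[OF s] b t Vt0 in auto)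
      then have "\<gamma> * (y1 0 * exp (- Ifn \<beta> y1 s) - y2 0 * exp (- Ifn \<beta> y2 s)) \<ge> \<gamma> * (- (2 * L * \<beta> * Vt))"
        using g by (intro mult_left_mono) auto
      then show ?thesis by (simp add: u_def c_def algebra_simps)
    qed
    have "w 0 + c * 0 \<le> w t + c * t"
    proof (rule mono_deriv[of 0 t "\<lambda>s. w s + c * s" "\<lambda>s. u s + c"])
      fix x assume x: "x \<in> {0..t}"
      have "((\<lambda>s. w s + c * s) has_real_derivative u x + c * 1) (at x within {0..L})"
        by (intro DERIV_add dw DERIV_cmult DERIV_ident) (use x t in auto)
      then have "((\<lambda>s. w s + c * s) has_real_derivative u x + c * 1) (at x within {0..t})"
        by (rule DERIV_subset) (use t in auto)
      then show "((\<lambda>s. w s + c * s) has_real_derivative u x + c) (at x within {0..t})" by simp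
    qed (use ub t in auto)
    moreover have "w 0 \<ge> 0" unfolding w_def using Fb_mono[OF b _ a] hb2[of 0] l2 by simp
    moreover have "c * t \<le> c * L" using c0 t by (intro mult_left_mono) auto
    ultimately have "- w t \<le> c * L" by simp
    moreover have "c * L = K * Vt" by (simp add: c_def K_def power2_eq_square)
    ultimately show ?thesis using Vt0 K0 by (simp add: v_def Vt_def)
  qed
  have "v t = 0" by (rule gronwall0[OF vc _ K0 key t]) (simp add: vnn)
  then have "Fb \<beta> (y2 t) \<le> Fb \<beta> (y1 t)" by (simp add: v_def w_def)
  then show ?thesis using Fb_strict[OF b, of "y1 t" "y2 t"] hb1[of t] t sub1 by force
qed




lemma lip:
  assumes g: "\<gamma> > 0" and b: "\<beta> \<ge> 0" and l1: "l1 > 0" and l12: "l1 < l2"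
    and g1: "good \<gamma> \<beta> l1 y1" and g2: "good \<gamma> \<beta> l2 y2"
  shows "\<And>t. t \<in> {0..l1} \<Longrightarrow> 0 \<le> y1 t - y2 t \<and> y1 t - y2 t \<le> \<gamma> * (l2 - l1)"
    and "\<And>t. t \<in> {0..l1} \<Longrightarrow> \<bar>Ifn \<beta> y1 t - Ifn \<beta> y2 t\<bar> \<le> 2 * l1^2 * \<beta> * \<gamma> * (l2 - l1)"
proof -
  have l2: "l2 > 0" using l1 l12 by simp
  note B1 = good_basic[OF g b l1 g1] and B2 = good_basic[OF g b l2 g2]
  have hb1: "\<And>t. t\<in>{0..l1} \<Longrightarrow> 0 \<le> y1 t \<and> y1 t \<le> 1" and e1: "y1 l1 = 1"
    using g1 unfolding good_def by auto
  have hb2: "\<And>t. t\<in>{0..l2} \<Longrightarrow> 0 \<le> y2 t \<and> y2 t \<le> 1" and e2: "y2 l2 = 1"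
    and dh2: "\<And>t. t\<in>{0..l2} \<Longrightarrow> (y2 has_real_derivative Dfn \<gamma> \<beta> y2 t) (at t within {0..l2})"
    using g2 unfolding good_def by auto
  have sub: "{0..l1} \<subseteq> {0..l2}" using l12 by auto
  have a: "y2 0 \<le> y1 0"
  proof (rule ccontr)
    assume "\<not> ?thesis"
    then have "y1 0 \<le> y2 0" by simp
    from cmp[OF g b l2 l1 g2 g1 _ _ this, of l1 l1] l1 l12 have "y1 l1 \<le> y2 l1" by auto
    moreover have "y2 l1 < y2 l2"
    proof (rule strict_mono_deriv[OF dh2])
      fix x assume x: "x \<in> {0..l2}"
      have "0 \<le> \<beta> * y2 x" using hb2[OF x] b by simp
      then have "1 + \<beta> * y2 x > 0" by linarith
      then show "Dfn \<gamma> \<beta> y2 x > 0" unfolding Dfn_def using g B2(5) by simp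
    qed (use l1 l12 in auto)
    ultimately show False using e1 e2 hb2[of l1] l1 l12 by auto
  qed
  have ord: "y2 t \<le> y1 t" if "t \<in> {0..l1}" for t
    using cmp[OF g b l1 l2 g1 g2 _ _ a, of l1 t] l12 that by auto
  define w where "w s = Fb \<beta> (y1 s) - Fb \<beta> (y2 s)" for s
  have Imono: "Ifn \<beta> y1 s \<le> Ifn \<beta> y2 s" if s: "s \<in> {0..l1}" for s
    unfolding Ifn_def
  proof (rule integral_le)
    show "(\<lambda>r. 2 * r / (1 + \<beta> * y1 r)) integrable_on {0..s}"
      by (rule Ifn_integrable[OF b B1(1)]) (use hb1 s in auto)
    show "(\<lambda>r. 2 * r / (1 + \<beta> * y2 r)) integrable_on {0..s}"
      by (rule Ifn_integrable[OF b B2(1)]) (use hb2 s sub in auto)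
    fix r assume r: "r \<in> {0..s}"
    then have rr: "r \<in> {0..l1}" using s by auto
    have "\<beta> * y2 r \<le> \<beta> * y1 r" using ord[OF rr] b by (simp add: mult_left_mono)
    moreover have "0 \<le> \<beta> * y2 r" using hb2[of r] rr sub b by auto
    ultimately show "2 * r / (1 + \<beta> * y1 r) \<le> 2 * r / (1 + \<beta> * y2 r)"
      using r by (intro divide_left_mono) auto
  qed
  have dw: "(w has_real_derivative (\<gamma> * y1 0 * exp (- Ifn \<beta> y1 s) - \<gamma> * y2 0 * exp (- Ifn \<beta> y2 s))) (at s within {0..l1})"
    if s: "s \<in> {0..l1}" for s
    unfolding w_def
    by (intro DERIV_diff B1(6) DERIV_subset[OF B2(6) sub]) (use s sub in auto)
  have wmono: "w s \<le> w l1" if s: "s \<in> {0..l1}" for s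
  proof (rule mono_deriv[OF dw])
    fix x assume x: "x \<in> {0..l1}"
    have "y2 0 * exp (- Ifn \<beta> y2 x) \<le> y1 0 * exp (- Ifn \<beta> y1 x)"
      using a Imono[OF x] hb2[of 0] l2 by (intro mult_mono) auto
    then show "0 \<le> \<gamma> * y1 0 * exp (- Ifn \<beta> y1 x) - \<gamma> * y2 0 * exp (- Ifn \<beta> y2 x)"
      using g by (simp add: mult.assoc mult_left_mono)
  qed (use s in auto)
  have wl1: "w l1 \<le> \<gamma> * (l2 - l1)"
  proof -
    have "\<gamma> * l1 - Fb \<beta> (y2 l1) \<le> \<gamma> * l2 - Fb \<beta> (y2 l2)"
    proof (rule mono_deriv[of 0 l2 "\<lambda>s. \<gamma> * s - Fb \<beta> (y2 s)" "\<lambda>s. \<gamma> - \<gamma> * y2 0 * exp (- Ifn \<beta> y2 s)"])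
      fix x assume x: "x \<in> {0..l2}"
      show "((\<lambda>s. \<gamma> * s - Fb \<beta> (y2 s)) has_real_derivative \<gamma> - \<gamma> * y2 0 * exp (- Ifn \<beta> y2 x)) (at x within {0..l2})"
        using DERIV_diff[OF DERIV_cmult[OF DERIV_ident] B2(6)[OF x], of \<gamma>] by simp
      have "y2 0 * exp (- Ifn \<beta> y2 x) \<le> 1 * 1" using hb2[of 0] l2 B2(3)[OF x] by (intro mult_mono) auto
      then have "\<gamma> * (y2 0 * exp (- Ifn \<beta> y2 x)) \<le> \<gamma> * (1 * 1)" using g by (intro mult_left_mono) auto
      then show "0 \<le> \<gamma> - \<gamma> * y2 0 * exp (- Ifn \<beta> y2 x)" by (simp add: mult.assoc)
    qed (use l1 l12 in auto)
    then show ?thesis unfolding w_def using e1 e2 by (simp add: algebra_simps)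
  qed
  show yb: "0 \<le> y1 t - y2 t \<and> y1 t - y2 t \<le> \<gamma> * (l2 - l1)" if t: "t \<in> {0..l1}" for t
  proof -
    have "y1 t - y2 t \<le> w t" unfolding w_def
      by (rule Fb_diff[OF b _ ord[OF t]]) (use hb2[of t] t sub in auto)
    then show ?thesis using ord[OF t] wmono[OF t] wl1 by auto
  qed
  show "\<bar>Ifn \<beta> y1 t - Ifn \<beta> y2 t\<bar> \<le> 2 * l1^2 * \<beta> * \<gamma> * (l2 - l1)" if t: "t \<in> {0..l1}" for t
  proof -
    have i1: "(\<lambda>r. 2 * r / (1 + \<beta> * y1 r)) integrable_on {0..t}"
      by (rule Ifn_integrable[OF b B1(1)]) (use hb1 t in auto)
    have i2: "(\<lambda>r. 2 * r / (1 + \<beta> * y2 r)) integrable_on {0..t}"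
      by (rule Ifn_integrable[OF b B2(1)]) (use hb2 t sub in auto)
    define C where "C = 2 * l1 * \<beta> * (\<gamma> * (l2 - l1))"
    have "Ifn \<beta> y2 t - Ifn \<beta> y1 t = integral {0..t} (\<lambda>r. 2 * r / (1 + \<beta> * y2 r) - 2 * r / (1 + \<beta> * y1 r))"
      unfolding Ifn_def by (rule integral_diff[OF i2 i1, symmetric])
    also have "\<dots> \<le> integral {0..t} (\<lambda>r. C)"
    proof (rule integral_le)
      show "(\<lambda>r. 2 * r / (1 + \<beta> * y2 r) - 2 * r / (1 + \<beta> * y1 r)) integrable_on {0..t}"
        using i2 i1 by (rule integrable_diff)
      fix r assume r: "r \<in> {0..t}"
      then have rr: "r \<in> {0..l1}" using t by auto
      have "2 * r / (1 + \<beta> * y2 r) - 2 * r / (1 + \<beta> * y1 r) \<le> 2 * l1 * \<beta> * max 0 (Fb \<beta> (y1 r) - Fb \<beta> (y2 r))"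
        by (rule arith1) (use b hb1[OF rr] hb2[of r] rr sub in auto)
      also have "\<dots> \<le> C" unfolding C_def
        using wmono[OF rr] wl1 b l1 g l12 unfolding w_def by (intro mult_left_mono) auto
      finally show "2 * r / (1 + \<beta> * y2 r) - 2 * r / (1 + \<beta> * y1 r) \<le> C" .
    qed (rule integrable_const_ivl)
    also have "\<dots> = t * C" using t by simp
    also have "\<dots> \<le> l1 * C" using t b g l12 by (intro mult_right_mono) (auto simp: C_def)
    also have "\<dots> = 2 * l1^2 * \<beta> * \<gamma> * (l2 - l1)" by (simp add: C_def power2_eq_square)
    finally show ?thesis using Imono[OF t] by simp
  qed
qed




lemma dist_pair_ge:
  fixes l1 t1 l2 t2 :: real
  shows "\<bar>l1 - l2\<bar> \<le> dist (l1, t1) (l2, t2)" "\<bar>t1 - t2\<bar> \<le> dist (l1, t1) (l2, t2)"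
proof -
  have "\<bar>l1 - l2\<bar> \<le> sqrt (\<bar>l1 - l2\<bar>\<^sup>2 + \<bar>t1 - t2\<bar>\<^sup>2)" by (rule real_sqrt_sum_squares_ge1)
  then show "\<bar>l1 - l2\<bar> \<le> dist (l1, t1) (l2, t2)" by (simp add: dist_Pair_Pair dist_real_def)
  have "\<bar>t1 - t2\<bar> \<le> sqrt (\<bar>l1 - l2\<bar>\<^sup>2 + \<bar>t1 - t2\<bar>\<^sup>2)" by (rule real_sqrt_sum_squares_ge2)
  then show "\<bar>t1 - t2\<bar> \<le> dist (l1, t1) (l2, t2)" by (simp add: dist_Pair_Pair dist_real_def)
qed

lemma clamp_bound:
  fixes g :: "real \<Rightarrow> real \<Rightarrow> real"
  assumes A: "A \<ge> 0" and B: "B \<ge> 0"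
    and H1: "\<And>l t t'. 0 < l \<Longrightarrow> l < M \<Longrightarrow> t \<in> {0..l} \<Longrightarrow> t' \<in> {0..l} \<Longrightarrow> \<bar>g l t - g l t'\<bar> \<le> A * \<bar>t - t'\<bar>"
    and H2: "\<And>l1 l2 s. 0 < l1 \<Longrightarrow> l1 < l2 \<Longrightarrow> l2 < M \<Longrightarrow> s \<in> {0..l1} \<Longrightarrow> \<bar>g l1 s - g l2 s\<bar> \<le> B * (l2 - l1)"
    and p: "0 < l1" "l1 \<le> l2" "l2 < M" "t1 \<in> {0..l1}" "t2 \<in> {0..l2}"
  shows "\<bar>g l1 t1 - g l2 t2\<bar> \<le> A * \<bar>t1 - t2\<bar> + (2 * A + B) * (l2 - l1)"
proof (cases "l1 = l2")
  case True
  then show ?thesis using H1[of l1 t1 t2] p A B by auto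
next
  case False
  then have lt: "l1 < l2" using p by simp
  define s where "s = min t2 l1"
  have s: "s \<in> {0..l1}" "s \<in> {0..l2}" using p by (auto simp: s_def)
  have st: "\<bar>s - t2\<bar> \<le> l2 - l1" using p by (auto simp: s_def)
  have "\<bar>g l1 t1 - g l2 t2\<bar> \<le> \<bar>g l1 t1 - g l1 s\<bar> + \<bar>g l1 s - g l2 s\<bar> + \<bar>g l2 s - g l2 t2\<bar>" by linarith
  also have "\<dots> \<le> A * \<bar>t1 - s\<bar> + B * (l2 - l1) + A * \<bar>s - t2\<bar>"
    using H1[of l1 t1 s] H2[of l1 l2 s] H1[of l2 s t2] p s lt by (intro add_mono) auto
  also have "\<dots> \<le> A * (\<bar>t1 - t2\<bar> + (l2 - l1)) + B * (l2 - l1) + A * (l2 - l1)"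
    using st A B by (intro add_mono mult_left_mono) auto
  finally show ?thesis by (simp add: algebra_simps)
qed

lemma clamp_cont:
  fixes g :: "real \<Rightarrow> real \<Rightarrow> real"
  assumes A: "A \<ge> 0" and B: "B \<ge> 0"
    and H1: "\<And>l t t'. 0 < l \<Longrightarrow> l < M \<Longrightarrow> t \<in> {0..l} \<Longrightarrow> t' \<in> {0..l} \<Longrightarrow> \<bar>g l t - g l t'\<bar> \<le> A * \<bar>t - t'\<bar>"
    and H2: "\<And>l1 l2 s. 0 < l1 \<Longrightarrow> l1 < l2 \<Longrightarrow> l2 < M \<Longrightarrow> s \<in> {0..l1} \<Longrightarrow> \<bar>g l1 s - g l2 s\<bar> \<le> B * (l2 - l1)"
  shows "continuous_on {p. 0 < fst p \<and> 0 \<le> snd p \<and> snd p \<le> fst p \<and> fst p < M} (\<lambda>p. g (fst p) (snd p))"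
proof (rule lipschitz_on_continuous_on[where L="3 * A + B"], rule lipschitz_onI)
  show "0 \<le> 3 * A + B" using A B by simp
  have main: "\<bar>g l1 t1 - g l2 t2\<bar> \<le> (3 * A + B) * dist (l1, t1) (l2, t2)"
    if p: "0 < l1" "l1 \<le> l2" "l2 < M" "t1 \<in> {0..l1}" "t2 \<in> {0..l2}" for l1 t1 l2 t2
  proof -
    have d1: "\<bar>l1 - l2\<bar> \<le> dist (l1, t1) (l2, t2)" by (rule dist_pair_ge(1))
    have d2: "\<bar>t1 - t2\<bar> \<le> dist (l1, t1) (l2, t2)" by (rule dist_pair_ge(2))
    have "\<bar>g l1 t1 - g l2 t2\<bar> \<le> A * \<bar>t1 - t2\<bar> + (2 * A + B) * (l2 - l1)"
      by (rule clamp_bound[OF A B H1 H2 p])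
    also have "\<dots> \<le> A * dist (l1, t1) (l2, t2) + (2 * A + B) * dist (l1, t1) (l2, t2)"
      using d1 d2 p A B by (intro add_mono mult_left_mono) auto
    finally show ?thesis by (simp add: algebra_simps)
  qed
  fix x y assume x: "x \<in> {p. 0 < fst p \<and> 0 \<le> snd p \<and> snd p \<le> fst p \<and> fst p < M}"
    and y: "y \<in> {p. 0 < fst p \<and> 0 \<le> snd p \<and> snd p \<le> fst p \<and> fst p < M}"
  obtain l1 t1 where x': "x = (l1, t1)" by (cases x)
  obtain l2 t2 where y': "y = (l2, t2)" by (cases y)
  show "dist (g (fst x) (snd x)) (g (fst y) (snd y)) \<le> (3 * A + B) * dist x y"
  proof (cases "l1 \<le> l2")
    case True then show ?thesis using main[of l1 l2 t1 t2] x y x' y' by (auto simp: dist_real_def)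
  next
    case False
    then have "\<bar>g l2 t2 - g l1 t1\<bar> \<le> (3 * A + B) * dist (l2, t2) (l1, t1)"
      using main[of l2 l1 t2 t1] x y x' y' by auto
    then show ?thesis using x' y' by (simp add: dist_real_def dist_commute abs_minus_commute)
  qed
qed

lemma local_to_global:
  fixes f :: "real \<times> real \<Rightarrow> real"
  assumes "\<And>M. continuous_on {p. 0 < fst p \<and> 0 \<le> snd p \<and> snd p \<le> fst p \<and> fst p < M} f"
  shows "continuous_on {p. 0 < fst p \<and> 0 \<le> snd p \<and> snd p \<le> fst p} f"
  unfolding continuous_on_eq_continuous_within
proof
  fix x :: "real \<times> real" assume x: "x \<in> {p. 0 < fst p \<and> 0 \<le> snd p \<and> snd p \<le> fst p}"
  define M where "M = fst x + 1"
  have "continuous (at x within {p. 0 < fst p \<and> 0 \<le> snd p \<and> snd p \<le> fst p \<and> fst p < M}) f"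
  proof -
    have "x \<in> {p. 0 < fst p \<and> 0 \<le> snd p \<and> snd p \<le> fst p \<and> fst p < M}" using x by (simp add: M_def)
    then show ?thesis using assms[of M] unfolding continuous_on_eq_continuous_within by blast
  qed
  moreover have "at x within {p. 0 < fst p \<and> 0 \<le> snd p \<and> snd p \<le> fst p \<and> fst p < M} =
      at x within {p. 0 < fst p \<and> 0 \<le> snd p \<and> snd p \<le> fst p}"
  proof (rule at_within_nhd[of _ "{p. fst p < M}"])
    show "x \<in> {p. fst p < M}" by (simp add: M_def)
    show "open {p :: real \<times> real. fst p < M}"
      by (rule open_Collect_less) (intro continuous_intros)+
  qed auto
  ultimately show "continuous (at x within {p. 0 < fst p \<and> 0 \<le> snd p \<and> snd p \<le> fst p}) f" by simp
qed


lemma Y_H1: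
  assumes g: "\<gamma> > 0" and b: "\<beta> \<ge> 0" and l: "l > 0" and gd: "good \<gamma> \<beta> l h"
    and t: "t \<in> {0..l}" "t' \<in> {0..l}"
  shows "\<bar>h t - h t'\<bar> \<le> \<gamma> * \<bar>t - t'\<bar>"
proof (rule bound_deriv[OF _ _ t])
  show "\<And>x. x \<in> {0..l} \<Longrightarrow> (h has_real_derivative Dfn \<gamma> \<beta> h x) (at x within {0..l})"
    using gd unfolding good_def by auto
  show "\<And>x. x \<in> {0..l} \<Longrightarrow> \<bar>Dfn \<gamma> \<beta> h x\<bar> \<le> \<gamma>"
    using good_basic(4)[OF g b l gd] by fastforce
qed

lemma I_H1:
  assumes g: "\<gamma> > 0" and b: "\<beta> \<ge> 0" and l: "l > 0" and gd: "good \<gamma> \<beta> l h"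
    and t: "t \<in> {0..l}" "t' \<in> {0..l}"
  shows "\<bar>Ifn \<beta> h t - Ifn \<beta> h t'\<bar> \<le> 2 * l * \<bar>t - t'\<bar>"
proof (rule bound_deriv[OF good_basic(2)[OF g b l gd] _ t])
  fix x assume x: "x \<in> {0..l}"
  have "0 \<le> \<beta> * h x" using gd x b unfolding good_def by auto
  then have p: "1 + \<beta> * h x \<ge> 1" by simp
  then have "2 * x / (1 + \<beta> * h x) \<le> 2 * x" using x by (simp add: divide_le_eq mult_le_cancel_left1)
  moreover have "0 \<le> 2 * x / (1 + \<beta> * h x)" using x p by simp
  ultimately show "\<bar>2 * x / (1 + \<beta> * h x)\<bar> \<le> 2 * l" using x
    by (metis (no_types, opaque_lifting) abs_of_nonneg atLeastAtMost_iff dual_order.trans mult_le_cancel_left_pos zero_less_numeral)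
qed

theorem lemma3p11:
  fixes \<gamma> \<beta> :: real and \<phi> :: "real \<Rightarrow> real \<Rightarrow> real"
  assumes "\<gamma> > 0"
    and "0 \<le> \<beta>" and "\<beta> < beta1 \<gamma>"
    and "\<And>lam. lam > 0 \<Longrightarrow> admissible lam (\<phi> lam) \<and> solves_bvp \<gamma> \<beta> lam (\<phi> lam)"
    and "\<And>lam h. lam > 0 \<Longrightarrow> admissible lam h \<Longrightarrow> solves_bvp \<gamma> \<beta> lam h \<Longrightarrow>
            \<forall>t\<in>{0..lam}. h t = \<phi> lam t"
  shows "\<exists>D :: real \<Rightarrow> real \<Rightarrow> real.
           (\<forall>lam>0. \<forall>t\<in>{0..lam}. (\<phi> lam has_real_derivative D lam t) (at t within {0..lam})) \<and>
           continuous_on {(lam, t). 0 < lam \<and> 0 \<le> t \<and> t \<le> lam} (\<lambda>(lam, t). D lam t) \<and>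
           continuous_on {0<..} (\<lambda>lam. D lam lam)"
proof -
  note g = assms(1) and b = assms(2)
  have gd: "good \<gamma> \<beta> lam (\<phi> lam)" if "lam > 0" for lam
    using assms(4)[OF that] to_good[OF b that] by blast
  define D where "D lam t = Dfn \<gamma> \<beta> (\<phi> lam) t" for lam t
  define S where "S = {p :: real \<times> real. 0 < fst p \<and> 0 \<le> snd p \<and> snd p \<le> fst p}"
  have Yc: "continuous_on S (\<lambda>p. \<phi> (fst p) (snd p))"
    unfolding S_def
  proof (rule local_to_global, rule clamp_cont[where A=\<gamma> and B=\<gamma>])
    show "0 \<le> \<gamma>" using g by simp
    show "0 \<le> \<gamma>" using g by simp
    fix M
    show "\<bar>\<phi> l t - \<phi> l t'\<bar> \<le> \<gamma> * \<bar>t - t'\<bar>"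
      if "0 < l" "l < M" "t \<in> {0..l}" "t' \<in> {0..l}" for l t t'
      using Y_H1[OF g b _ gd] that by blast
    show "\<bar>\<phi> l1 s - \<phi> l2 s\<bar> \<le> \<gamma> * (l2 - l1)"
      if "0 < l1" "l1 < l2" "l2 < M" "s \<in> {0..l1}" for l1 l2 s
      using lip(1)[OF g b that(1,2) gd gd that(4)] that by auto
  qed
  have Ic: "continuous_on S (\<lambda>p. Ifn \<beta> (\<phi> (fst p)) (snd p))"
    unfolding S_def
  proof (rule local_to_global)
    fix M :: real
    show "continuous_on {p. 0 < fst p \<and> 0 \<le> snd p \<and> snd p \<le> fst p \<and> fst p < M} (\<lambda>p. Ifn \<beta> (\<phi> (fst p)) (snd p))"
    proof (rule clamp_cont[where A="2 * \<bar>M\<bar>" and B="2 * M^2 * \<beta> * \<gamma>"])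
      show "0 \<le> 2 * \<bar>M\<bar>" by simp
      show "0 \<le> 2 * M^2 * \<beta> * \<gamma>" using g b by simp
      show "\<bar>Ifn \<beta> (\<phi> l) t - Ifn \<beta> (\<phi> l) t'\<bar> \<le> 2 * \<bar>M\<bar> * \<bar>t - t'\<bar>"
        if l: "0 < l" "l < M" "t \<in> {0..l}" "t' \<in> {0..l}" for l t t'
      proof -
        have "\<bar>Ifn \<beta> (\<phi> l) t - Ifn \<beta> (\<phi> l) t'\<bar> \<le> 2 * l * \<bar>t - t'\<bar>"
          using I_H1[OF g b l(1) gd[OF l(1)] l(3,4)] .
        also have "\<dots> \<le> 2 * \<bar>M\<bar> * \<bar>t - t'\<bar>" using l by (intro mult_right_mono) auto
        finally show ?thesis .
      qed
      show "\<bar>Ifn \<beta> (\<phi> l1) s - Ifn \<beta> (\<phi> l2) s\<bar> \<le> 2 * M^2 * \<beta> * \<gamma> * (l2 - l1)"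
        if l: "0 < l1" "l1 < l2" "l2 < M" "s \<in> {0..l1}" for l1 l2 s
      proof -
        have "\<bar>Ifn \<beta> (\<phi> l1) s - Ifn \<beta> (\<phi> l2) s\<bar> \<le> 2 * l1^2 * \<beta> * \<gamma> * (l2 - l1)"
          using lip(2)[OF g b l(1,2) gd gd l(4)] l by auto
        also have "\<dots> \<le> 2 * M^2 * \<beta> * \<gamma> * (l2 - l1)"
        proof -
          have "l1^2 \<le> M^2" using l by (intro power_mono) auto
          then show ?thesis using l g b by (intro mult_right_mono) auto
        qed
        finally show ?thesis .
      qed
    qed
  qed
  have Y0c: "continuous_on S (\<lambda>p. \<phi> (fst p) 0)"
  proof -
    have "continuous_on S (\<lambda>x. (\<lambda>p. \<phi> (fst p) (snd p)) ((\<lambda>p. (fst p, 0 :: real)) x))"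
      by (rule continuous_on_compose2[OF Yc]) (auto simp: S_def intro!: continuous_intros)
    then show ?thesis by simp
  qed
  have den: "\<forall>p\<in>S. 1 + \<beta> * \<phi> (fst p) (snd p) \<noteq> 0"
  proof
    fix p assume p: "p \<in> S"
    then have "0 \<le> \<phi> (fst p) (snd p)" using gd[of "fst p"] unfolding S_def good_def by auto
    then have "0 \<le> \<beta> * \<phi> (fst p) (snd p)" using b by simp
    then show "1 + \<beta> * \<phi> (fst p) (snd p) \<noteq> 0" by linarith
  qed
  have Dc: "continuous_on S (\<lambda>p. D (fst p) (snd p))"
    unfolding D_def Dfn_def using Yc Ic Y0c den by (intro continuous_intros) auto
  show ?thesis
  proof (intro exI[of _ D] conjI allI impI ballI)
    fix lam t :: real assume "lam > 0" "t \<in> {0..lam}"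
    then show "(\<phi> lam has_real_derivative D lam t) (at t within {0..lam})"
      using gd[of lam] unfolding good_def D_def by auto
  next
    have "{(lam, t). 0 < lam \<and> 0 \<le> t \<and> t \<le> lam} = S" by (auto simp: S_def)
    moreover have "(\<lambda>(lam, t). D lam t) = (\<lambda>p. D (fst p) (snd p))" by (auto simp: case_prod_beta)
    ultimately show "continuous_on {(lam, t). 0 < lam \<and> 0 \<le> t \<and> t \<le> lam} (\<lambda>(lam, t). D lam t)"
      using Dc by simp
  next
    have "continuous_on {0<..} (\<lambda>x. (\<lambda>p. D (fst p) (snd p)) ((\<lambda>l. (l, l)) x))"
      by (rule continuous_on_compose2[OF Dc]) (auto simp: S_def intro!: continuous_intros)
    then show "continuous_on {0<..} (\<lambda>lam. D lam lam)" by simp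
  qed
qed


end
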